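(* If $c$ is the characteristic of a field (so $c=0$ or $c$ is a prime), then the set of non-negative integers is the disjoint union of $S_c$ and $T_c$.
   Context: Sets $S_c$: $S_0$ is the set of all non-negative integers; $S_2=\{0\}$; $S_3$ is the smallest set of non-negative integers containing $0$ such that whenever $a$ is an even element of $S_3$, the integers $3a,3a+1,3a+4,3a+5$ lie in $S_3$; for a prime $p\ge5$, with $\pi_p$ the largest integer $<p/3$, $S_p$ is the smallest set of non-negative integers containing $[0,2\pi_p]\cap\mathbb Z$ such that whenever $\theta$ is a non-negative even element of $S_p$, all non-negative integers in $[p\theta-2\pi_p-1,p\theta+2\pi_p]$ lie in $S_p$. Sets $T_c$: $T_0=\emptyset$; $T_2$ is the set of all positive integers; for an odd prime $p$, a non-negative integer $a$ lies in $T_p$ iff there exist an odd integer $J$ and $q=p^e$ with $e\ge1$ such that $Jq-\{\frac q3\}\le a<Jq+\{\frac q3\}$, where for an integer $b$, $\{\frac b3\}$ denotes the integer nearest to $b/3$ (i.e. $\frac b3,\frac{b-1}3,\frac{b+1}3$ according as $b\equiv0,1,2\pmod 3$). *)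

theory Defs
  imports Complex_Main "HOL-Computational_Algebra.Primes"
begin

inductive_set S3 :: "nat set" where
  S3_zero: "0 \<in> S3"
| S3_step: "a \<in> S3 \<Longrightarrow> even a \<Longrightarrow>
     b \<in> {3 * a, 3 * a + 1, 3 * a + 4, 3 * a + 5} \<Longrightarrow> b \<in> S3"

definition pi_p :: "nat \<Rightarrow> nat" where
  "pi_p p = (GREATEST k::nat. real k < real p / 3)"

inductive_set Sp :: "nat \<Rightarrow> nat set" for p :: nat where
  Sp_base: "a \<le> 2 * pi_p p \<Longrightarrow> a \<in> Sp p"
| Sp_step: "\<theta> \<in> Sp p \<Longrightarrow> even \<theta> \<Longrightarrow>
     int p * int \<theta> - 2 * int (pi_p p) - 1 \<le> int a \<Longrightarrow>
     int a \<le> int p * int \<theta> + 2 * int (pi_p p) \<Longrightarrow> a \<in> Sp p"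

definition S :: "nat \<Rightarrow> nat set" where
  "S c = (if c = 0 then UNIV else if c = 2 then {0} else if c = 3 then S3 else Sp c)"

definition near3 :: "int \<Rightarrow> int" where
  "near3 b = (if b mod 3 = 0 then b div 3
              else if b mod 3 = 1 then (b - 1) div 3 else (b + 1) div 3)"

definition T :: "nat \<Rightarrow> nat set" where
  "T c = (if c = 0 then {} else if c = 2 then {a. 0 < a}
          else {a. \<exists>J::int. \<exists>e::nat. odd J \<and> e \<ge> 1 \<and>
                  J * int (c ^ e) - near3 (int (c ^ e)) \<le> int a \<and>
                  int a < J * int (c ^ e) + near3 (int (c ^ e))})"

end

theory Submission
  imports Defs
begin


lemma partition_abs:
  fixes Sx Tx :: "nat set" and W :: "nat \<Rightarrow> bool" and m :: "nat \<Rightarrow> nat"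
  assumes "0 \<in> Sx" "0 \<notin> Tx"
    and "\<And>a. W a \<Longrightarrow> a \<in> Tx \<and> a \<notin> Sx"
    and "\<And>a. \<not> W a \<Longrightarrow> a > 0 \<Longrightarrow> m a < a \<and> (a \<in> Sx \<longleftrightarrow> m a \<in> Sx) \<and> (a \<in> Tx \<longleftrightarrow> m a \<in> Tx)"
  shows "a \<in> Sx \<longleftrightarrow> a \<notin> Tx"
proof (induction a rule: less_induct)
  case (less a)
  show ?case
  proof (cases "W a")
    case True then show ?thesis using assms(3) by blast
  next
    case False
    show ?thesis
    proof (cases "a = 0")
      case True then show ?thesis using assms(1,2) by simp
    next
      case False2: False
      then have "m a < a" "(a \<in> Sx \<longleftrightarrow> m a \<in> Sx)" "(a \<in> Tx \<longleftrightarrow> m a \<in> Tx)"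
        using assms(4)[OF False] by auto
      then show ?thesis using less.IH by blast
    qed
  qed
qed

lemma near3_1: "near3 (3*X+1) = X"
proof -
  have "(3*X+1) mod 3 = 1" by (simp add: mod_add_left_eq[symmetric])
  then show ?thesis unfolding near3_def by simp
qed
lemma near3_m1: "near3 (3*X-1) = X"
proof -
  have e: "3*X-1 = 3*(X-1) + 2" by simp
  have "(3*X-1) mod 3 = 2" by presburger
  moreover have "(3*X-1+1) div 3 = X" by simp
  ultimately show ?thesis unfolding near3_def by simp
qed
lemma near3_0: "near3 (3*X) = X" unfolding near3_def by simp
lemma pi_p_eq: assumes "p \<ge> 1" shows "pi_p p = (p - 1) div 3"
proof -
  have iff: "real k < real p / 3 \<longleftrightarrow> 3*k < p" for k
  proof -
    have "real k < real p / 3 \<longleftrightarrow> real (3*k) < real p" by (simp add: field_simps)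
    then show ?thesis by linarith
  qed
  have "3 * ((p - 1) div 3) < p" using assms by linarith
  then show ?thesis unfolding pi_p_def
    by (intro Greatest_equality) (auto simp: iff)
qed

lemma p_mod6: assumes "prime (p::nat)" "p \<ge> 5" shows "p mod 6 = 1 \<or> p mod 6 = 5"
proof -
  have "\<not> 2 dvd p" using assms unfolding prime_nat_iff by force
  moreover have "\<not> 3 dvd p" using assms unfolding prime_nat_iff by force
  ultimately show ?thesis by presburger
qed


lemma pow_mod6: assumes "(p::nat) mod 6 = 1 \<or> p mod 6 = 5" shows "p^e mod 6 = 1 \<or> p^e mod 6 = 5"
proof (induction e)
  case 0 then show ?case by simp
next
  case (Suc e)
  have "p^Suc e mod 6 = ((p mod 6) * (p^e mod 6)) mod 6" by (simp add: mod_mult_eq)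
  then show ?case using Suc assms by auto
qed

lemma key_arith:
  fixes P N k r \<epsilon> \<delta> :: int
  assumes e: "\<epsilon>=1 \<or> \<epsilon>=-1" and d: "\<delta>=1 \<or> \<delta>=-1" and "even N" "odd k" "P \<ge> 1"
    "-(2*P+\<epsilon>) \<le> r" "r \<le> 2*P+\<epsilon>-1"
  shows "(-(3*P*N+P*\<delta>+N*\<epsilon>) \<le> (3*P+\<epsilon>)*k + r \<and> (3*P+\<epsilon>)*k + r < 3*P*N+P*\<delta>+N*\<epsilon>)
         \<longleftrightarrow> (-N \<le> k \<and> k < N)"
proof -
  have pos: "3*P+\<epsilon> > 0" using e assms by auto
  show ?thesis
  proof
    assume h: "-(3*P*N+P*\<delta>+N*\<epsilon>) \<le> (3*P+\<epsilon>)*k + r \<and> (3*P+\<epsilon>)*k + r < 3*P*N+P*\<delta>+N*\<epsilon>"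
    show "-N \<le> k \<and> k < N"
    proof (rule ccontr)
      assume "\<not> (-N \<le> k \<and> k < N)"
      then have "k \<le> -N-1 \<or> k \<ge> N+1" using assms by presburger
      then show False
      proof
        assume "k \<le> -N-1"
        then have "(3*P+\<epsilon>)*k \<le> (3*P+\<epsilon>)*(-N-1)" using pos by (intro mult_left_mono) auto
        then show False using h e d assms by (auto simp: algebra_simps)
      next
        assume "k \<ge> N+1"
        then have "(3*P+\<epsilon>)*k \<ge> (3*P+\<epsilon>)*(N+1)" using pos by (intro mult_left_mono) auto
        then show False using h e d assms by (auto simp: algebra_simps)
      qed
    qed
  next
    assume "-N \<le> k \<and> k < N"
    then have k: "k \<ge> 1-N" "k \<le> N-1" using assms by presburger+
    have "(3*P+\<epsilon>)*k \<le> (3*P+\<epsilon>)*(N-1)" using pos k by (intro mult_left_mono) auto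
    moreover have "(3*P+\<epsilon>)*k \<ge> (3*P+\<epsilon>)*(1-N)" using pos k by (intro mult_left_mono) auto
    ultimately show "-(3*P*N+P*\<delta>+N*\<epsilon>) \<le> (3*P+\<epsilon>)*k + r \<and> (3*P+\<epsilon>)*k + r < 3*P*N+P*\<delta>+N*\<epsilon>"
      using e d assms by (auto simp: algebra_simps)
  qed
qed

lemma p_struct:
  assumes "prime (p::nat)" "p \<ge> 5"
  shows "\<exists>P \<epsilon>. int p = 3*P+\<epsilon> \<and> (\<epsilon>=1 \<or> \<epsilon>=-1) \<and> near3 (int p) = P \<and>
           2*int(pi_p p)+1 = 2*P+\<epsilon> \<and> P \<ge> 2"
proof -
  have m: "p mod 6 = 1 \<or> p mod 6 = 5" using p_mod6 assms by auto
  then have m3: "p mod 3 = 1 \<or> p mod 3 = 2" by presburger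
  show ?thesis
  proof (cases "p mod 3 = 1")
    case True
    obtain t where t: "p = 3*t+1" using True by (metis div_mult_mod_eq mult.commute)
    have pi: "pi_p p = t" using pi_p_eq[of p] t by simp
    have "int p = 3*int t+1" using t by simp
    moreover have "near3 (int p) = int t" using calculation near3_1 by simp
    moreover have "2*int(pi_p p)+1 = 2*int t+1" using pi by simp
    moreover have "int t \<ge> 2" using assms(2) t by simp
    ultimately show ?thesis by blast
  next
    case False
    then have "p mod 3 = 2" using m3 by simp
    then obtain t where t: "p = 3*t+2" by (metis div_mult_mod_eq mult.commute)
    have pi: "pi_p p = t" using pi_p_eq[of p] t by simp
    have "int p = 3*(int t + 1) + (-1)" using t by simp
    moreover have "near3 (int p) = int t + 1" using t near3_m1[of "int t + 1"] by (simp add: algebra_simps)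
    moreover have "2*int(pi_p p)+1 = 2*(int t + 1) + (-1)" using pi by simp
    moreover have "int t + 1 \<ge> 2" using assms(2) t by simp
    moreover have "(-1::int) = 1 \<or> (-1::int) = -1" by simp
    ultimately show ?thesis by blast
  qed
qed

lemma q_struct:
  assumes "(q::nat) mod 6 = 1 \<or> q mod 6 = 5"
  shows "\<exists>N \<delta>. int q = 3*N+\<delta> \<and> (\<delta>=1 \<or> \<delta>=-1) \<and> near3 (int q) = N \<and> even N \<and> N \<ge> 0"
proof (cases "q mod 6 = 1")
  case True
  define N where "N = 2 * int (q div 6)"
  have "int q = 3*N+1" using True unfolding N_def by presburger
  moreover have "near3 (int q) = N" using calculation near3_1 by simp
  ultimately show ?thesis unfolding N_def by fastforce
next
  case False
  define N where "N = 2 * int (q div 6) + 2"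
  have "int q = 3*N + (-1)" using False assms unfolding N_def by presburger
  moreover have "near3 (int q) = N" using calculation near3_m1 by simp
  ultimately show ?thesis unfolding N_def by fastforce
qed



lemma main5:
  fixes p :: nat and P \<epsilon> :: int
  assumes pr: "prime p" "p \<ge> 5"
    and pe: "int p = 3*P+\<epsilon>" "\<epsilon>=1 \<or> \<epsilon>=-1" "near3 (int p) = P" "2*int(pi_p p)+1 = 2*P+\<epsilon>" "P \<ge> 2"
  shows "a \<in> Sp p \<longleftrightarrow> a \<notin> T p"
proof -
  define pp where "pp = int p"
  have pp: "pp = 3*P+\<epsilon>" "pp > 0" using pe unfolding pp_def by auto
  define EW where "EW m x \<longleftrightarrow> even m \<and> pp*m - (2*P+\<epsilon>) \<le> x \<and> x \<le> pp*m + 2*P+\<epsilon>-1" for m x :: int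
  define OW where "OW m x \<longleftrightarrow> odd m \<and> pp*m - P \<le> x \<and> x \<le> pp*m + P - 1" for m x :: int
  define TW where "TW J q x \<longleftrightarrow> J*q - near3 q \<le> x \<and> x < J*q + near3 q" for J q x :: int
  have Tp: "T p = {a. \<exists>J::int. \<exists>e::nat. odd J \<and> e \<ge> 1 \<and> TW J (int (p^e)) (int a)}"
  proof -
    have "p \<noteq> 0" "p \<noteq> 2" using pr(2) by auto
    then show ?thesis unfolding T_def TW_def by simp
  qed
  have Tmem: "x \<in> T p \<longleftrightarrow> (\<exists>J::int. \<exists>e::nat. odd J \<and> e \<ge> 1 \<and> TW J (int (p^e)) (int x))" for x
    unfolding Tp by (rule mem_Collect_eq)
  have cover: "\<exists>m. EW m x \<or> OW m x" for x
  proof -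
    define A where "A = x + 2*P+\<epsilon>"
    define b where "b = A div (2*pp)"
    define r where "r = A mod (2*pp)"
    have pp2: "2*pp > 0" using pp(2) by simp
    have Ar: "A = 2*pp*b + r" "0 \<le> r" "r < 2*pp"
      unfolding b_def r_def using pos_mod_sign[OF pp2, of A] pos_mod_bound[OF pp2, of A]
        div_mult_mod_eq[of A "2*pp"] by (simp_all add: algebra_simps)
    show ?thesis
    proof (cases "r < 4*P+2*\<epsilon>")
      case True
      have e1: "pp*(2*b) = 2*pp*b" by simp
      have "EW (2*b) x" unfolding EW_def
      proof (intro conjI)
        show "pp * (2 * b) - (2 * P + \<epsilon>) \<le> x" using Ar A_def e1 by linarith
        show "x \<le> pp * (2 * b) + 2 * P + \<epsilon> - 1" using Ar A_def e1 True by linarith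
      qed simp
      then show ?thesis by blast
    next
      case False
      have e1: "pp*(2*b+1) = 2*pp*b + pp" by (simp add: algebra_simps)
      have "OW (2*b+1) x" unfolding OW_def
      proof (intro conjI)
        show "pp * (2 * b + 1) - P \<le> x" using Ar A_def e1 pp(1) False by linarith
        show "x \<le> pp * (2 * b + 1) + P - 1" using Ar A_def e1 pp(1) by linarith
      qed simp
      then show ?thesis by blast
    qed
  qed
  have EWuniq: "m1 = m2" if "EW m1 x" "EW m2 x" for m1 m2 x
  proof -
    have h: "pp*m1 - (2*P+\<epsilon>) \<le> x" "x \<le> pp*m1 + 2*P+\<epsilon>-1" "pp*m2 - (2*P+\<epsilon>) \<le> x" "x \<le> pp*m2 + 2*P+\<epsilon>-1"
      using that unfolding EW_def by blast+
    have "pp*m1 - pp*m2 < pp*2" using h pp(1) pe(5) by linarith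
    have "pp*m2 - pp*m1 < pp*2" using h pp(1) pe(5) by linarith
    then have "pp*(m1-m2) < pp*2" "pp*(m2-m1) < pp*2" using \<open>pp*m1 - pp*m2 < pp*2\<close> by (simp_all add: right_diff_distrib)
    then have "m1-m2 < 2" "m2-m1 < 2" using pp mult_less_cancel_left_pos by blast+
    moreover have "even m1" "even m2" using that unfolding EW_def by auto
    ultimately show ?thesis by presburger
  qed
  have EWOW: "False" if "EW m1 x" "OW m2 x" for m1 m2 x
  proof -
    have h: "pp*m1 - (2*P+\<epsilon>) \<le> x" "x \<le> pp*m1 + 2*P+\<epsilon>-1" "pp*m2 - P \<le> x" "x \<le> pp*m2 + P - 1"
      using that unfolding EW_def OW_def by blast+
    have "pp*m1 - pp*m2 < pp*1" using h pp(1) pe(5) by linarith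
    have "pp*m2 - pp*m1 < pp*1" using h pp(1) pe(5) by linarith
    then have "pp*(m1-m2) < pp*1" "pp*(m2-m1) < pp*1" using \<open>pp*m1 - pp*m2 < pp*1\<close> by (simp_all add: right_diff_distrib)
    then have "m1-m2 < 1" "m2-m1 < 1" using pp mult_less_cancel_left_pos by blast+
    moreover have "even m1" "odd m2" using that unfolding EW_def OW_def by auto
    ultimately show ?thesis by presburger
  qed
  have EWnn: "m \<ge> 0" if "EW m x" "x \<ge> 0" for m x
  proof -
    have h: "x \<le> pp*m + 2*P+\<epsilon>-1" using that unfolding EW_def by blast
    have "pp*(-1) < pp*m" using h that(2) pp(1) pe by linarith
    then have "-1 < m" using pp mult_less_cancel_left_pos by blast
    then show ?thesis by simp
  qed
  have EWlt: "m < x" if "EW m x" "x > 0" for m x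
  proof (cases "m = 0")
    case True then show ?thesis using that by simp
  next
    case False
    moreover have "even m" using that unfolding EW_def by auto
    ultimately have "m \<ge> 2" using EWnn[OF that(1)] that(2) by presburger
    then have "(pp-1)*m \<ge> (pp-1)*2" using pp pe by (intro mult_left_mono) auto
    then have "pp*m - m \<ge> 2*pp - 2" by (simp add: algebra_simps)
    moreover have h: "pp*m - (2*P+\<epsilon>) \<le> x" using that unfolding EW_def by blast
    ultimately show ?thesis using pp(1) pe by linarith
  qed
  have pi2: "2*int(pi_p p) = 2*P+\<epsilon>-1" using pe by linarith
  have Sp_char: "a \<in> Sp p \<longleftrightarrow> (\<exists>\<theta>\<in>Sp p. EW (int \<theta>) (int a))" for a
  proof
    assume "a \<in> Sp p"
    then show "\<exists>\<theta>\<in>Sp p. EW (int \<theta>) (int a)"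
    proof cases
      case Sp_base
      have "0 \<in> Sp p" by (rule Sp.Sp_base) simp
      moreover have "int a \<le> 2*int (pi_p p)" using Sp_base by simp
      then have "EW 0 (int a)" unfolding EW_def using pi2 pe(2,5) by simp
      ultimately show ?thesis by force
    next
      case (Sp_step \<theta>)
      have "EW (int \<theta>) (int a)" unfolding EW_def
      proof (intro conjI)
        show "even (int \<theta>)" using Sp_step by simp
        show "pp * int \<theta> - (2 * P + \<epsilon>) \<le> int a" using Sp_step(3) pi2 unfolding pp_def by linarith
        show "int a \<le> pp * int \<theta> + 2 * P + \<epsilon> - 1" using Sp_step(4) pi2 unfolding pp_def by linarith
      qed
      then show ?thesis using Sp_step by blast
    qed
  next
    assume "\<exists>\<theta>\<in>Sp p. EW (int \<theta>) (int a)"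
    then obtain \<theta> where th: "\<theta> \<in> Sp p" "EW (int \<theta>) (int a)" by blast
    then have h: "even \<theta>" "pp * int \<theta> - (2 * P + \<epsilon>) \<le> int a" "int a \<le> pp * int \<theta> + 2 * P + \<epsilon> - 1"
      unfolding EW_def by auto
    show "a \<in> Sp p"
    proof (rule Sp.Sp_step[OF th(1) h(1)])
      show "int p * int \<theta> - 2 * int (pi_p p) - 1 \<le> int a" using h(2) pi2 unfolding pp_def by linarith
      show "int a \<le> int p * int \<theta> + 2 * int (pi_p p)" using h(3) pi2 unfolding pp_def by linarith
    qed
  qed
  have key: "TW J (int (p^Suc e)) x \<longleftrightarrow> TW J (int (p^e)) m" if "EW m x" "odd J" for J m x and e :: nat
  proof -
    have "p^e mod 6 = 1 \<or> p^e mod 6 = 5" using pow_mod6 p_mod6 pr by blast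
    then obtain N \<delta> where q: "int (p^e) = 3*N+\<delta>" "\<delta>=1 \<or> \<delta>=-1" "near3 (int (p^e)) = N" "even N" "N \<ge> 0"
      using q_struct by blast
    have pq: "int (p^Suc e) = pp * int (p^e)" unfolding pp_def by simp
    have "pp * int (p^e) = 3*(3*P*N+P*\<delta>+N*\<epsilon>) + \<epsilon>*\<delta>" using q pp by (simp add: algebra_simps)
    moreover have "\<epsilon>*\<delta> = 1 \<or> \<epsilon>*\<delta> = -1" using q pe by auto
    ultimately have nq: "near3 (int (p^Suc e)) = 3*P*N+P*\<delta>+N*\<epsilon>"
      using pq near3_1 near3_m1 by (metis diff_conv_add_uminus)
    define k where "k = m - J * int (p^e)"
    have "odd (int (p^e))" using q by presburger
    then have kodd: "odd k" using that unfolding k_def EW_def by simp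
    have H1: "x - J * int (p^Suc e) = (3*P+\<epsilon>)*k + (x - pp*m)" unfolding k_def pq pp(1)[symmetric]
      by (simp add: algebra_simps)
    have H2: "m - J * int (p^e) = k" unfolding k_def by simp
    have r: "-(2*P+\<epsilon>) \<le> x - pp*m" "x - pp*m \<le> 2*P+\<epsilon>-1" using that unfolding EW_def by auto
    have ka: "(-(3*P*N+P*\<delta>+N*\<epsilon>) \<le> (3*P+\<epsilon>)*k + (x - pp*m) \<and> (3*P+\<epsilon>)*k + (x - pp*m) < 3*P*N+P*\<delta>+N*\<epsilon>)
         \<longleftrightarrow> (-N \<le> k \<and> k < N)"
      using key_arith[OF pe(2) q(2) q(4) kodd _ r(1) r(2)] pe(5) by simp
    define nv where "nv = 3*P*N+P*\<delta>+N*\<epsilon>"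
    have A1: "J * int (p^Suc e) - nv \<le> x \<longleftrightarrow> -nv \<le> (3*P+\<epsilon>)*k + (x - pp*m)" by (intro iffI; insert H1; linarith)
    have A2: "x < J * int (p^Suc e) + nv \<longleftrightarrow> (3*P+\<epsilon>)*k + (x - pp*m) < nv" by (intro iffI; insert H1; linarith)
    have A3: "J * int (p^e) - N \<le> m \<longleftrightarrow> -N \<le> k" by (intro iffI; insert H2; linarith)
    have A4: "m < J * int (p^e) + N \<longleftrightarrow> k < N" by (intro iffI; insert H2; linarith)
    show ?thesis unfolding TW_def nq q(3) nv_def[symmetric] A1 A2 A3 A4 using ka unfolding nv_def by blast
  qed
  have TW1: "TW J (int (p^1)) x \<longleftrightarrow> OW J x" if "odd J" for J x
  proof -
    have "int (p^1) = pp" "near3 (int (p^1)) = P" using pe(3) unfolding pp_def by simp_all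
    then show ?thesis unfolding TW_def OW_def using that by (simp add: mult.commute)
  qed
  define W where "W a \<longleftrightarrow> (\<exists>m. OW m (int a))" for a :: nat
  define mf where "mf a = nat (SOME m. EW m (int a))" for a :: nat
  show ?thesis
  proof (rule partition_abs[where W=W and m=mf])
    show "0 \<in> Sp p" by (rule Sp.Sp_base) simp
  next
    show "0 \<notin> T p"
    proof
      assume "0 \<in> T p"
      then obtain J e where J: "odd J" "e \<ge> 1" "TW J (int (p^e)) (int 0)" unfolding Tmem by blast
      have "p^e mod 6 = 1 \<or> p^e mod 6 = 5" using pow_mod6 p_mod6 pr by blast
      then obtain N \<delta> where q: "int (p^e) = 3*N+\<delta>" "\<delta>=1 \<or> \<delta>=-1" "near3 (int (p^e)) = N" "even N" "N \<ge> 0"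
        using q_struct by blast
      have "p \<le> p^e" using J(2) pr(2) by (intro self_le_power) auto
      then have q5: "int (p^e) \<ge> 5" using pr(2) by linarith
      have h: "J * int (p^e) - N \<le> 0" "0 < J * int (p^e) + N" using J(3) unfolding TW_def q(3) of_nat_0 by simp_all
      have "J \<ge> 1 \<or> J \<le> -1" using J(1) by presburger
      then show False
      proof
        assume "J \<ge> 1"
        then have "J * int (p^e) \<ge> 1 * int (p^e)" using q5 by (intro mult_right_mono) auto
        then show False using h q q5 by linarith
      next
        assume "J \<le> -1"
        then have "J * int (p^e) \<le> (-1) * int (p^e)" using q5 by (intro mult_right_mono) auto
        then show False using h q q5 by linarith
      qed
    qed
  next
    fix a assume "W a"
    then obtain m where m: "OW m (int a)" unfolding W_def by blast
    have mo: "odd m" using m unfolding OW_def by blast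
    have "TW m (int (p^1)) (int a)" using TW1[OF mo] m by blast
    then have "a \<in> T p" unfolding Tmem using mo by (intro exI[of _ m] exI[of _ 1]) simp
    moreover have "a \<notin> Sp p"
    proof
      assume "a \<in> Sp p"
      then obtain \<theta> where "EW (int \<theta>) (int a)" using Sp_char by blast
      then show False using EWOW m by blast
    qed
    ultimately show "a \<in> T p \<and> a \<notin> Sp p" by blast
  next
    fix a assume nW: "\<not> W a" and a0: "a > 0"
    obtain m where "EW m (int a) \<or> OW m (int a)" using cover by blast
    then have em: "EW m (int a)" using nW unfolding W_def by blast
    have "EW (SOME m. EW m (int a)) (int a)" by (rule someI_ex) (rule exI, rule em)
    then have "(SOME m. EW m (int a)) = m" using EWuniq em by blast
    then have mf: "mf a = nat m" unfolding mf_def by simp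
    have m0: "m \<ge> 0" using EWnn em by simp
    have mfm: "int (mf a) = m" using mf m0 by simp
    have em': "EW (int (mf a)) (int a)" using em mfm by simp
    have "mf a < a" using EWlt[OF em] a0 mfm by linarith
    moreover have "a \<in> Sp p \<longleftrightarrow> mf a \<in> Sp p"
    proof
      assume "a \<in> Sp p"
      then obtain \<theta> where th: "\<theta> \<in> Sp p" "EW (int \<theta>) (int a)" using Sp_char by blast
      then have "int \<theta> = int (mf a)" using EWuniq em' by blast
      then show "mf a \<in> Sp p" using th by simp
    next
      assume "mf a \<in> Sp p"
      then show "a \<in> Sp p" using Sp_char em' by blast
    qed
    moreover have "a \<in> T p \<longleftrightarrow> mf a \<in> T p"
    proof
      assume "a \<in> T p"
      then obtain J e where J: "odd J" "e \<ge> 1" "TW J (int (p^e)) (int a)" unfolding Tmem by blast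
      show "mf a \<in> T p"
      proof (cases "e = 1")
        case True
        then have "OW J (int a)" using J TW1 by simp
        then show ?thesis using EWOW em' by blast
      next
        case False
        then obtain e' where e': "e = Suc e'" "e' \<ge> 1" using J by (cases e) auto
        then have "TW J (int (p^e')) (int (mf a))" using key[OF em' J(1)] J by simp
        then show ?thesis unfolding Tmem using J e' by (intro exI[of _ J] exI[of _ e']) simp
      qed
    next
      assume "mf a \<in> T p"
      then obtain J e where J: "odd J" "e \<ge> 1" "TW J (int (p^e)) (int (mf a))" unfolding Tmem by blast
      then have "TW J (int (p^Suc e)) (int a)" using key[OF em' J(1)] by simp
      moreover have "Suc e \<ge> 1" by simp
      ultimately show "a \<in> T p" unfolding Tmem using J(1) by (intro exI[of _ J] exI[of _ "Suc e"]) simp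
    qed
    ultimately show "mf a < a \<and> (a \<in> Sp p \<longleftrightarrow> mf a \<in> Sp p) \<and> (a \<in> T p \<longleftrightarrow> mf a \<in> T p)" by blast
  qed
qed



lemma S3_mod: "x \<in> S3 \<Longrightarrow> x mod 6 \<in> {0,1,4,5}"
proof (induction rule: S3.induct)
  case S3_zero then show ?case by simp
next
  case (S3_step a b)
  from S3_step(2,3) show ?case by auto
qed

lemma key3_arith:
  fixes k Q r :: int
  assumes "odd k" "odd Q" "r \<in> {0,1,4,5}"
  shows "(-3*Q \<le> 3*k + r \<and> 3*k + r < 3*Q) \<longleftrightarrow> (-Q \<le> k \<and> k < Q)"
proof
  assume h: "-3*Q \<le> 3*k + r \<and> 3*k + r < 3*Q"
  have r: "0 \<le> r" "r \<le> 5" using assms(3) by auto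
  show "-Q \<le> k \<and> k < Q"
  proof (rule ccontr)
    assume "\<not> (-Q \<le> k \<and> k < Q)"
    then have "k \<le> -Q-2 \<or> k \<ge> Q" using assms(1,2) by presburger
    then show False using h r by linarith
  qed
next
  assume h: "-Q \<le> k \<and> k < Q"
  have r: "0 \<le> r" "r \<le> 5" using assms(3) by auto
  have "k \<le> Q - 2" using h assms(1,2) by presburger
  then show "-3*Q \<le> 3*k + r \<and> 3*k + r < 3*Q" using h r by linarith
qed

lemma main3: "a \<in> S3 \<longleftrightarrow> a \<notin> T 3"
proof -
  define TW where "TW J q x \<longleftrightarrow> J*q - near3 q \<le> x \<and> x < J*q + near3 q" for J q x :: int
  have Tmem: "x \<in> T 3 \<longleftrightarrow> (\<exists>J::int. \<exists>e::nat. odd J \<and> e \<ge> 1 \<and> TW J (int (3^e)) (int x))" for x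
    unfolding T_def TW_def by simp
  have n3: "near3 (int (3^Suc e)) = int (3^e)" for e
  proof -
    have "int (3^Suc e) = 3 * int (3^e)" by simp
    then show ?thesis using near3_0 by simp
  qed
  have TW1: "TW J (int (3^1)) x \<longleftrightarrow> 3*J - 1 \<le> x \<and> x < 3*J + 1" for J x
    using n3[of 0] unfolding TW_def by (simp add: mult.commute)
  define W where "W x \<longleftrightarrow> x mod 6 \<in> {2,3}" for x :: nat
  define mf where "mf x = 2 * (x div 6)" for x :: nat
  show ?thesis
  proof (rule partition_abs[where W=W and m=mf])
    show "0 \<in> S3" by (rule S3_zero)
  next
    show "0 \<notin> T 3"
    proof
      assume "0 \<in> T 3"
      then obtain J e where J: "odd J" "e \<ge> 1" "TW J (int (3^e)) (int 0)" unfolding Tmem by blast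
      obtain e' where e': "e = Suc e'" using J(2) by (cases e) auto
      have h: "J * int (3^e) - int (3^e') \<le> 0" "0 < J * int (3^e) + int (3^e')"
        using J(3) unfolding TW_def e' n3 of_nat_0 by simp_all
      have q: "int (3^e) = 3 * int (3^e')" unfolding e' by simp
      have q1: "int (3^e') \<ge> 1" by simp
      have "J \<ge> 1 \<or> J \<le> -1" using J(1) by presburger
      then show False
      proof
        assume "J \<ge> 1"
        then have "J * int (3^e) \<ge> 1 * int (3^e)" by (intro mult_right_mono) auto
        then show False using h q q1 by linarith
      next
        assume "J \<le> -1"
        then have "J * int (3^e) \<le> (-1) * int (3^e)" by (intro mult_right_mono) auto
        then show False using h q q1 by linarith
      qed
    qed
  next
    fix x assume "W x"
    then have xm: "x mod 6 = 2 \<or> x mod 6 = 3" unfolding W_def by auto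
    define J where "J = 2 * int (x div 6) + 1"
    have "x = 6 * (x div 6) + x mod 6" by simp
    then have "int x = 6 * int (x div 6) + int (x mod 6)" by (metis of_nat_add of_nat_mult of_nat_numeral)
    then have "3*J - 1 \<le> int x \<and> int x < 3*J + 1" unfolding J_def using xm by auto
    then have "TW J (int (3^1)) (int x)" using TW1 by blast
    moreover have "odd J" unfolding J_def by simp
    ultimately have "x \<in> T 3" unfolding Tmem by (intro exI[of _ J] exI[of _ 1]) simp
    moreover have "x \<notin> S3" using S3_mod xm by fastforce
    ultimately show "x \<in> T 3 \<and> x \<notin> S3" by blast
  next
    fix x assume nW: "\<not> W x" and x0: "x > 0"
    have xm: "x mod 6 \<in> {0,1,4,5}" using nW unfolding W_def by auto
    have lt: "mf x < x" unfolding mf_def using x0 by simp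
    have mfe: "even (mf x)" unfolding mf_def by simp
    have xr: "x \<in> {3 * mf x, 3 * mf x + 1, 3 * mf x + 4, 3 * mf x + 5}"
      using xm unfolding mf_def insert_iff empty_iff by presburger
    have "x \<in> S3 \<longleftrightarrow> mf x \<in> S3"
    proof
      assume "x \<in> S3"
      then show "mf x \<in> S3"
      proof cases
        case S3_zero then show ?thesis using x0 by simp
      next
        case (S3_step a)
        have "mf x = a" using S3_step(2,3) unfolding mf_def by auto
        then show ?thesis using S3_step by simp
      qed
    next
      assume "mf x \<in> S3"
      then show "x \<in> S3" using mfe xr by (rule S3_step)
    qed
    moreover have "x \<in> T 3 \<longleftrightarrow> mf x \<in> T 3"
    proof -
      define m where "m = int (mf x)"
      have "int x = 3*m + 0 \<or> int x = 3*m+1 \<or> int x = 3*m+4 \<or> int x = 3*m+5" using xr unfolding m_def by auto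
      then obtain r where r: "int x = 3*m + r" "r \<in> {0,1,4,5}" by blast
      have me: "even m" using mfe unfolding m_def by simp
      have keyq: "TW J (int (3^Suc (Suc e))) (int x) \<longleftrightarrow> TW J (int (3^Suc e)) m" if "odd J" for J e
      proof -
        define Q where "Q = int (3^e)"
        have Qo: "odd Q" unfolding Q_def by simp
        have a1: "int (3^Suc (Suc e)) = 9*Q" "int (3^Suc e) = 3*Q" unfolding Q_def by simp_all
        have a2: "near3 (9*Q) = 3*Q" "near3 (3*Q) = Q" using near3_0[of "3*Q"] near3_0[of Q] by simp_all
        define k where "k = m - 3*(J*Q)"
        have ko: "odd k" unfolding k_def using me that Qo by simp
        have "TW J (int (3^Suc (Suc e))) (int x) \<longleftrightarrow> (-3*Q \<le> 3*k + r \<and> 3*k + r < 3*Q)"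
          unfolding TW_def a1 a2 r(1) k_def by (simp add: algebra_simps)
        moreover have "TW J (int (3^Suc e)) m \<longleftrightarrow> (-Q \<le> k \<and> k < Q)"
          unfolding TW_def a1 a2 k_def by (simp add: algebra_simps)
        ultimately show ?thesis using key3_arith[OF ko Qo r(2)] by simp
      qed
      show ?thesis
      proof
        assume "x \<in> T 3"
        then obtain J e where J: "odd J" "e \<ge> 1" "TW J (int (3^e)) (int x)" unfolding Tmem by blast
        show "mf x \<in> T 3"
        proof (cases "e = 1")
          case True
          then have h: "3*J - 1 \<le> int x" "int x < 3*J + 1" using J(3) TW1 by auto
          obtain c where c: "J = 2*c+1" using J(1) by (metis oddE)
          have "int x = 6*c+2 \<or> int x = 6*c+3" using h c by linarith
          then have "x mod 6 = 2 \<or> x mod 6 = 3" by presburger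
          then show ?thesis using xm by auto
        next
          case False
          then obtain e' where e': "e = Suc (Suc e')" using J(2)
            by (metis One_nat_def Suc_le_D less_eq_Suc_le not0_implies_Suc not_less_eq_eq)
          then have "TW J (int (3^Suc e')) (int (mf x))" using keyq[OF J(1)] J(3) unfolding m_def by simp
          then show ?thesis unfolding Tmem using J(1) by (intro exI[of _ J] exI[of _ "Suc e'"]) simp
        qed
      next
        assume "mf x \<in> T 3"
        then obtain J e where J: "odd J" "e \<ge> 1" "TW J (int (3^e)) (int (mf x))" unfolding Tmem by blast
        obtain e' where e': "e = Suc e'" using J(2) by (cases e) auto
        have "TW J (int (3^Suc (Suc e'))) (int x)" using keyq[OF J(1)] J(3) unfolding m_def e' by simp
        then show "x \<in> T 3" unfolding Tmem using J(1) by (intro exI[of _ J] exI[of _ "Suc (Suc e')"]) simp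
      qed
    qed
    ultimately show "mf x < x \<and> (x \<in> S3 \<longleftrightarrow> mf x \<in> S3) \<and> (x \<in> T 3 \<longleftrightarrow> mf x \<in> T 3)" using lt by blast
  qed
qed


theorem theorem6p1:
  fixes c :: nat
  assumes "c = 0 \<or> prime c"
  shows "S c \<union> T c = UNIV \<and> S c \<inter> T c = {}"
proof -
  have eq: "a \<in> S c \<longleftrightarrow> a \<notin> T c" for a
  proof (cases "c = 0")
    case True then show ?thesis unfolding S_def T_def by simp
  next
    case c0: False
    then have pc: "prime c" using assms by simp
    show ?thesis
    proof (cases "c = 2")
      case True then show ?thesis unfolding S_def T_def by simp
    next
      case c2: False
      show ?thesis
      proof (cases "c = 3")
        case True
        then have "S c = S3" unfolding S_def by simp
        then show ?thesis using main3 True by simp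
      next
        case c3: False
        have "c \<ge> 2" using pc prime_ge_2_nat by blast
        moreover have "c \<noteq> 4"
        proof
          assume "c = 4"
          then have "2 dvd c" by simp
          then show False using pc c2 unfolding prime_nat_iff by force
        qed
        ultimately have c5: "c \<ge> 5" using c2 c3 by linarith
        obtain P \<epsilon> where pe: "int c = 3*P+\<epsilon>" "\<epsilon>=1 \<or> \<epsilon>=-1" "near3 (int c) = P"
            "2*int(pi_p c)+1 = 2*P+\<epsilon>" "P \<ge> 2"
          using p_struct[OF pc c5] by blast
        have "S c = Sp c" unfolding S_def using c0 c2 c3 by simp
        then show ?thesis using main5[OF pc c5 pe] by simp
      qed
    qed
  qed
  show ?thesis using eq by blast
qed

end
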